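(* Let $k \geq 3$ and $n \geq 2^{k-1}$ be integers, and let $A \subseteq \{1,2,\ldots,n\}$ be a set that contains no $k$-term geometric progression. Then \[ n - |A| \geq \left( \frac{1}{2^k -1} + \frac{2}{5}\left( \frac{1}{5^{k-1} } - \frac{1}{6^{k-1}} \right) + \frac{4}{15}\left( \frac{1}{7^{k-1} } - \frac{1}{10^{k-1}} \right) \right) n + O\left(\frac{\log n}{k} \right), \] where the implied constant in the $O$-term is absolute (independent of $n$, $k$ and $A$).
   Context: A geometric progression of length $k$ with common ratio $r$, where $r \neq 0, \pm 1$ is a real number, is a sequence $(a_0, a_1, \ldots, a_{k-1})$ of nonzero real numbers with $a_i/a_{i-1} = r$ for $i = 1, \ldots, k-1$. A $k$-term (or $k$-) geometric progression is a geometric progression of length $k$ with some common ratio $r$. A set contains no $k$-term geometric progression if it does not contain numbers $a_0, \ldots, a_{k-1}$ such that $(a_0, \ldots, a_{k-1})$ is a $k$-term geometric progression. *)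

theory Defs
  imports Complex_Main
begin

definition is_geom_prog :: "nat \<Rightarrow> real \<Rightarrow> (nat \<Rightarrow> real) \<Rightarrow> bool" where
  "is_geom_prog k r a \<longleftrightarrow> r \<noteq> 0 \<and> r \<noteq> 1 \<and> r \<noteq> -1 \<and>
     (\<forall>i<k. a i \<noteq> 0) \<and> (\<forall>i. 1 \<le> i \<and> i < k \<longrightarrow> a i / a (i - 1) = r)"

definition contains_k_GP :: "nat \<Rightarrow> real set \<Rightarrow> bool" where
  "contains_k_GP k S \<longleftrightarrow> (\<exists>r a. is_geom_prog k r a \<and> (\<forall>i<k. a i \<in> S))"

definition gp_const :: "nat \<Rightarrow> real" where
  "gp_const k = 1 / (2 ^ k - 1)
     + 2 / 5 * (1 / 5 ^ (k - 1) - 1 / 6 ^ (k - 1))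
     + 4 / 15 * (1 / 7 ^ (k - 1) - 1 / 10 ^ (k - 1))"

end

theory Submission
  imports Defs "HOL-Computational_Algebra.Primes"
begin

lemma prime_pow_cancel:
  fixes p x y :: nat
  assumes p: "prime p" and x: "\<not> p dvd x" and y: "\<not> p dvd y" and e: "p^a * x = p^b * y"
  shows "a = b \<and> x = y"
proof -
  have gen: "a' = b' \<and> x' = y'" if le: "a' \<le> b'" and x': "\<not> p dvd x'" and e': "p^a' * x' = p^b' * y'" for a' b' x' y'
  proof -
    have "p^b' = p^a' * p^(b'-a')" using le by (simp flip: power_add)
    with e' have "p^a' * x' = p^a' * (p^(b'-a') * y')" by (metis mult.assoc)
    moreover have "p > 0" using p prime_gt_0_nat by blast
    ultimately have xe: "x' = p^(b'-a') * y'" by simp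
    show ?thesis
    proof (cases "b' = a'")
      case True thus ?thesis using xe by simp
    next
      case False
      hence "b' - a' > 0" using le by simp
      hence "p dvd p^(b'-a')" by (simp add: dvd_power)
      hence "p dvd x'" using xe by simp
      thus ?thesis using x' by simp
    qed
  qed
  show ?thesis
  proof (cases "a \<le> b")
    case True thus ?thesis using gen[OF True x e] by simp
  next
    case False thus ?thesis using gen[of b a y x] y e by simp
  qed
qed

lemma pick:
  assumes "\<not> contains_k_GP k (real ` A)" "is_geom_prog k r (\<lambda>t. real (g t))"
  shows "\<exists>t<k. g t \<notin> A"
  using assms unfolding contains_k_GP_def by blast

lemma gp_pq:
  assumes "c > 0" "p > 0" "q > 0" "p \<noteq> q"
  shows "is_geom_prog k (real p / real q) (\<lambda>t. real (q^(k-1-t) * p^t * c))"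
  unfolding is_geom_prog_def
proof (intro conjI allI impI)
  show "real p / real q \<noteq> 0" using assms by simp
  show "real p / real q \<noteq> 1" using assms by simp
  show "real p / real q \<noteq> -1" using assms
    by (metis divide_nonneg_nonneg neg_0_le_iff_le of_nat_0_le_iff zero_neq_neg_one le_minus_one_simps(3) order.trans)
  fix i assume "i < k" thus "real (q^(k-1-i) * p^i * c) \<noteq> 0" using assms by simp
next
  fix i assume i: "1 \<le> i \<and> i < k"
  then obtain i' where ii: "i = Suc i'" by (cases i) auto
  have d: "k - 1 - (i - 1) = Suc (k - 1 - i)" using i ii by simp
  have d2: "p ^ i = p * p ^ (i - 1)" using ii by simp
  show "real (q ^ (k - 1 - i) * p ^ i * c) / real (q ^ (k - 1 - (i - 1)) * p ^ (i - 1) * c) = real p / real q"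
    using assms unfolding d d2 by (simp add: field_simps)
qed

definition F1 :: "nat \<Rightarrow> nat \<Rightarrow> nat \<Rightarrow> (nat \<times> nat) set" where
  "F1 k n J = (SIGMA j:{..<J}. {m. odd m \<and> m * 2^(j*k+k-1) \<le> n})"
definition g1 :: "nat \<Rightarrow> nat \<times> nat \<Rightarrow> nat \<Rightarrow> nat" where
  "g1 k jm t = snd jm * 2^(fst jm * k + t)"
definition F2 :: "nat \<Rightarrow> nat \<Rightarrow> nat set" where
  "F2 k n = {c. odd c \<and> \<not> 5 dvd c \<and> n div 6^(k-1) < c \<and> c \<le> n div 5^(k-1)}"
definition g2 :: "nat \<Rightarrow> nat \<Rightarrow> nat \<Rightarrow> nat" where
  "g2 k c t = 3^(k-1-t) * 5^t * c"
definition F3 :: "nat \<Rightarrow> nat \<Rightarrow> nat set" where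
  "F3 k n = {c. odd c \<and> \<not> 3 dvd c \<and> \<not> 5 dvd c \<and> n div 10^(k-1) < c \<and> c \<le> n div 7^(k-1)}"
definition g3 :: "nat \<Rightarrow> nat \<Rightarrow> nat \<Rightarrow> nat" where
  "g3 k c t = 5^(k-1-t) * 7^t * c"

lemma le_div_mult: "(c::nat) \<le> n div d \<Longrightarrow> c * d \<le> n"
  by (meson dual_order.trans mult_le_mono1 div_times_less_eq_dividend)

lemma div_less_mult: "n div d < (c::nat) \<Longrightarrow> d > 0 \<Longrightarrow> n < c * d"
  by (metis div_less_iff_less_mult)

lemma pw_le: "t < k \<Longrightarrow> (a::nat) \<le> b \<Longrightarrow> a^(k-1-t) * b^t \<le> b^(k-1)"
proof -
  assume t: "t < k" and ab: "a \<le> b"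
  have "a^(k-1-t) * b^t \<le> b^(k-1-t) * b^t" by (simp add: ab power_mono)
  also have "\<dots> = b^(k-1)" using t by (simp flip: power_add)
  finally show ?thesis .
qed

lemma pw_ge: "t < k \<Longrightarrow> (a::nat) \<le> b \<Longrightarrow> a^(k-1) \<le> a^(k-1-t) * b^t"
proof -
  assume t: "t < k" and ab: "a \<le> b"
  have "a^(k-1) = a^(k-1-t) * a^t" using t by (simp flip: power_add)
  also have "\<dots> \<le> a^(k-1-t) * b^t" by (simp add: ab power_mono)
  finally show ?thesis .
qed

lemma E1:
  assumes "jm \<in> F1 k n J" "t < k"
  shows "g1 k jm t \<in> {1..n}" "odd (g1 k jm t) \<Longrightarrow> 2^(k-1) * g1 k jm t \<le> n"
proof -
  obtain j m where jm: "jm = (j,m)" "odd m" "m * 2^(j*k+k-1) \<le> n" using assms(1) unfolding F1_def by auto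
  have "m * 2^(j*k+t) \<le> m * 2^(j*k+k-1)" using assms(2) by (intro mult_le_mono2 power_increasing) auto
  hence "m * 2^(j*k+t) \<le> n" using jm(3) by linarith
  moreover have "m \<ge> 1" using jm(2) by (cases m) auto
  ultimately show "g1 k jm t \<in> {1..n}" using jm unfolding g1_def by auto
  assume "odd (g1 k jm t)"
  hence "j*k+t = 0" using jm unfolding g1_def by (cases "j*k+t") auto
  hence "g1 k jm t = m" using jm unfolding g1_def by simp
  moreover have "m * 2^(k-1) \<le> m * 2^(j*k+k-1)" by (intro mult_le_mono2 power_increasing) auto
  hence "m * 2^(k-1) \<le> n" using jm(3) by linarith
  ultimately show "2^(k-1) * g1 k jm t \<le> n" using jm by (simp add: mult.commute)
qed

lemma E2:
  assumes "c \<in> F2 k n" "t < k"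
  shows "g2 k c t \<in> {1..n}" "odd (g2 k c t)" "n < 2^(k-1) * g2 k c t"
proof -
  have c: "odd c" "\<not> 5 dvd c" "n div 6^(k-1) < c" "c \<le> n div 5^(k-1)" using assms(1) unfolding F2_def by auto
  have "g2 k c t \<le> 5^(k-1) * c" unfolding g2_def using pw_le[OF assms(2), of 3 5] by simp
  also have "\<dots> \<le> n" using le_div_mult[OF c(4)] by (simp add: mult.commute)
  finally have "g2 k c t \<le> n" .
  moreover have "c \<ge> 1" using c(1) by (cases c) auto
  ultimately show "g2 k c t \<in> {1..n}" unfolding g2_def by auto
  show "odd (g2 k c t)" using c(1) unfolding g2_def by simp
  have "n < c * 6^(k-1)" using div_less_mult[OF c(3)] by simp
  also have "\<dots> = 2^(k-1) * (3^(k-1) * c)" by (simp add: power_mult_distrib[symmetric])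
  also have "\<dots> \<le> 2^(k-1) * g2 k c t" unfolding g2_def using pw_ge[OF assms(2), of 3 5] by simp
  finally show "n < 2^(k-1) * g2 k c t" .
qed

lemma E3:
  assumes "c \<in> F3 k n" "t < k"
  shows "g3 k c t \<in> {1..n}" "odd (g3 k c t)" "n < 2^(k-1) * g3 k c t"
proof -
  have c: "odd c" "n div 10^(k-1) < c" "c \<le> n div 7^(k-1)" using assms(1) unfolding F3_def by auto
  have "g3 k c t \<le> 7^(k-1) * c" unfolding g3_def using pw_le[OF assms(2), of 5 7] by simp
  also have "\<dots> \<le> n" using le_div_mult[OF c(3)] by (simp add: mult.commute)
  finally have "g3 k c t \<le> n" .
  moreover have "c \<ge> 1" using c(1) by (cases c) auto
  ultimately show "g3 k c t \<in> {1..n}" unfolding g3_def by auto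
  show "odd (g3 k c t)" using c(1) unfolding g3_def by simp
  have "n < c * 10^(k-1)" using div_less_mult[OF c(2)] by simp
  also have "\<dots> = 2^(k-1) * (5^(k-1) * c)" by (simp add: power_mult_distrib[symmetric])
  also have "\<dots> \<le> 2^(k-1) * g3 k c t" unfolding g3_def using pw_ge[OF assms(2), of 5 7] by simp
  finally show "n < 2^(k-1) * g3 k c t" .
qed

lemma p2: "prime (2::nat)" by simp
lemma p3: "prime (3::nat)" unfolding prime_nat_iff' by (simp add: numeral_eq_Suc atLeastLessThanSuc, presburger)
lemma p5: "prime (5::nat)" unfolding prime_nat_iff' by (simp add: numeral_eq_Suc atLeastLessThanSuc, presburger)

lemma nd: "prime (p::nat) \<Longrightarrow> \<not> p dvd q \<Longrightarrow> \<not> p dvd c \<Longrightarrow> \<not> p dvd q^a * c"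
  by (metis prime_dvd_mult_iff prime_dvd_power)

lemma inj1:
  assumes "jm \<in> F1 k n J" "jm' \<in> F1 k n J" "t < k" "t' < k" "g1 k jm t = g1 k jm' t'"
  shows "jm = jm'"
proof -
  obtain j m where jm: "jm = (j,m)" "odd m" using assms(1) unfolding F1_def by auto
  obtain j' m' where jm': "jm' = (j',m')" "odd m'" using assms(2) unfolding F1_def by auto
  have "2^(j*k+t) * m = 2^(j'*k+t') * m'" using assms(5) unfolding g1_def jm jm' by (simp add: mult.commute)
  from prime_pow_cancel[OF p2 _ _ this] jm jm' have e: "j*k+t = j'*k+t'" "m = m'" by auto
  have "(j*k+t) div k = j" using assms(3) by simp
  moreover have "(j'*k+t') div k = j'" using assms(4) by simp
  ultimately have "j = j'" using e by simp
  thus ?thesis using e jm jm' by simp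
qed

lemma inj2:
  assumes "c \<in> F2 k n" "c' \<in> F2 k n" "t < k" "t' < k" "g2 k c t = g2 k c' t'"
  shows "c = c'"
proof -
  have c: "\<not> 5 dvd c" "\<not> 5 dvd c'" using assms unfolding F2_def by auto
  have "5^t * (3^(k-1-t) * c) = 5^t' * (3^(k-1-t') * c')" using assms(5) unfolding g2_def by (simp add: mult_ac)
  from prime_pow_cancel[OF p5 nd[OF p5 _ c(1)] nd[OF p5 _ c(2)] this]
  have "t = t'" "3^(k-1-t) * c = 3^(k-1-t') * c'" by auto
  thus ?thesis by simp
qed

lemma inj3:
  assumes "c \<in> F3 k n" "c' \<in> F3 k n" "t < k" "t' < k" "g3 k c t = g3 k c' t'"
  shows "c = c'"
proof -
  have c: "\<not> 5 dvd c" "\<not> 5 dvd c'" using assms unfolding F3_def by auto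
  have "5^(k-1-t) * (7^t * c) = 5^(k-1-t') * (7^t' * c')" using assms(5) unfolding g3_def by (simp add: mult_ac)
  from prime_pow_cancel[OF p5 nd[OF p5 _ c(1)] nd[OF p5 _ c(2)] this]
  have "k-1-t = k-1-t'" "7^t * c = 7^t' * c'" by auto
  moreover have "t = t'" using calculation(1) assms(3,4) by simp
  ultimately show ?thesis by simp
qed

lemma disj12:
  assumes "jm \<in> F1 k n J" "c \<in> F2 k n" "t < k" "t' < k"
  shows "g1 k jm t \<noteq> g2 k c t'"
  using E1(2)[OF assms(1,3)] E2(2,3)[OF assms(2,4)] by fastforce

lemma disj13:
  assumes "jm \<in> F1 k n J" "c \<in> F3 k n" "t < k" "t' < k"
  shows "g1 k jm t \<noteq> g3 k c t'"
  using E1(2)[OF assms(1,3)] E3(2,3)[OF assms(2,4)] by fastforce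

lemma disj23:
  assumes "c \<in> F2 k n" "c' \<in> F3 k n" "t < k" "t' < k"
  shows "g2 k c t \<noteq> g3 k c' t'"
proof
  assume eq: "g2 k c t = g3 k c' t'"
  have c: "\<not> 5 dvd c" "n div 6^(k-1) < c" using assms unfolding F2_def by auto
  have c': "\<not> 5 dvd c'" "\<not> 3 dvd c'" "c' \<le> n div 7^(k-1)" using assms unfolding F3_def by auto
  have "5^t * (3^(k-1-t) * c) = 5^(k-1-t') * (7^t' * c')" using eq unfolding g2_def g3_def by (simp add: mult_ac)
  from prime_pow_cancel[OF p5 nd[OF p5 _ c(1)] nd[OF p5 _ c'(1)] this]
  have e: "t = k-1-t'" "3^(k-1-t) * c = 7^t' * c'" by auto
  have "k-1-t = t'" using e(1) assms(4) by simp
  with e(2) have e2: "3^t' * c = 7^t' * c'" by simp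
  have "t' = 0"
  proof (rule ccontr)
    assume "t' \<noteq> 0"
    hence "3 dvd 3^t' * c" by simp
    hence "3 dvd 7^t' * c'" using e2 by simp
    moreover have "\<not> 3 dvd 7^t' * c'" by (rule nd[OF p3 _ c'(2)]) simp
    ultimately show False by simp
  qed
  with e2 have "c = c'" by simp
  moreover have "n div 7^(k-1) \<le> n div 6^(k-1)" by (intro div_le_mono2) (auto intro: power_mono)
  ultimately show False using c(2) c'(3) by simp
qed

lemma choose_tau:
  assumes "\<forall>i\<in>I. \<exists>r. is_geom_prog k r (\<lambda>t. real (g i t))" "\<not> contains_k_GP k (real ` A)"
  obtains \<tau> where "\<forall>i\<in>I. \<tau> i < k \<and> g i (\<tau> i) \<notin> A"
proof -
  have "\<forall>i\<in>I. \<exists>t. t < k \<and> g i t \<notin> A" using assms pick by blast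
  then obtain \<tau> where "\<forall>i\<in>I. \<tau> i < k \<and> g i (\<tau> i) \<notin> A" by metis
  thus ?thesis using that by blast
qed

lemma gp1: "jm \<in> F1 k n J \<Longrightarrow> is_geom_prog k 2 (\<lambda>t. real (g1 k jm t))"
proof -
  assume "jm \<in> F1 k n J"
  then obtain j m where jm: "jm = (j,m)" "odd m" unfolding F1_def by auto
  have m: "m > 0" using jm(2) by (cases m) auto
  have eq: "(\<lambda>t. real (g1 k jm t)) = (\<lambda>t. real (1^(k-1-t) * 2^t * (m * 2^(j*k))))"
    unfolding g1_def jm by (simp add: power_add mult_ac)
  show ?thesis unfolding eq using gp_pq[of "m * 2^(j*k)" 2 1 k] m by simp
qed

lemma gp2: "is_geom_prog k (real 5 / real 3) (\<lambda>t. real (g2 k c t))" if "c \<in> F2 k n"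
proof -
  have "c > 0" using that unfolding F2_def by (cases c) auto
  thus ?thesis unfolding g2_def using gp_pq[of c 5 3 k] by simp
qed

lemma gp3: "is_geom_prog k (real 7 / real 5) (\<lambda>t. real (g3 k c t))" if "c \<in> F3 k n"
proof -
  have "c > 0" using that unfolding F3_def by (cases c) auto
  thus ?thesis unfolding g3_def using gp_pq[of c 7 5 k] by simp
qed

lemma count_main:
  assumes nA: "\<not> contains_k_GP k (real ` A)" and An: "A \<subseteq> {1..n}"
  shows "card (F1 k n J) + card (F2 k n) + card (F3 k n) \<le> n - card A"
proof -
  obtain \<tau>1 where t1: "\<forall>i\<in>F1 k n J. \<tau>1 i < k \<and> g1 k i (\<tau>1 i) \<notin> A"
    using choose_tau[of "F1 k n J" k "g1 k" A] gp1 nA by blast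
  obtain \<tau>2 where t2: "\<forall>i\<in>F2 k n. \<tau>2 i < k \<and> g2 k i (\<tau>2 i) \<notin> A"
    using choose_tau[of "F2 k n" k "g2 k" A] gp2 nA by blast
  obtain \<tau>3 where t3: "\<forall>i\<in>F3 k n. \<tau>3 i < k \<and> g3 k i (\<tau>3 i) \<notin> A"
    using choose_tau[of "F3 k n" k "g3 k" A] gp3 nA by blast
  define h1 where "h1 = (\<lambda>i. g1 k i (\<tau>1 i))"
  define h2 where "h2 = (\<lambda>i. g2 k i (\<tau>2 i))"
  define h3 where "h3 = (\<lambda>i. g3 k i (\<tau>3 i))"
  have i1: "inj_on h1 (F1 k n J)"
  proof (rule inj_onI)
    fix x y assume "x \<in> F1 k n J" "y \<in> F1 k n J" "h1 x = h1 y"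
    thus "x = y" using inj1[of x k n J y "\<tau>1 x" "\<tau>1 y"] t1 unfolding h1_def by simp
  qed
  have i2: "inj_on h2 (F2 k n)"
  proof (rule inj_onI)
    fix x y assume "x \<in> F2 k n" "y \<in> F2 k n" "h2 x = h2 y"
    thus "x = y" using inj2[of x k n y "\<tau>2 x" "\<tau>2 y"] t2 unfolding h2_def by simp
  qed
  have i3: "inj_on h3 (F3 k n)"
  proof (rule inj_onI)
    fix x y assume "x \<in> F3 k n" "y \<in> F3 k n" "h3 x = h3 y"
    thus "x = y" using inj3[of x k n y "\<tau>3 x" "\<tau>3 y"] t3 unfolding h3_def by simp
  qed
  have s1: "h1 ` F1 k n J \<subseteq> {1..n} - A"
  proof
    fix x assume "x \<in> h1 ` F1 k n J"
    then obtain i where i: "i \<in> F1 k n J" "x = h1 i" by blast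
    thus "x \<in> {1..n} - A" using t1 E1(1)[OF i(1), of "\<tau>1 i"] unfolding h1_def by auto
  qed
  have s2: "h2 ` F2 k n \<subseteq> {1..n} - A"
  proof
    fix x assume "x \<in> h2 ` F2 k n"
    then obtain i where i: "i \<in> F2 k n" "x = h2 i" by blast
    thus "x \<in> {1..n} - A" using t2 E2(1)[OF i(1), of "\<tau>2 i"] unfolding h2_def by auto
  qed
  have s3: "h3 ` F3 k n \<subseteq> {1..n} - A"
  proof
    fix x assume "x \<in> h3 ` F3 k n"
    then obtain i where i: "i \<in> F3 k n" "x = h3 i" by blast
    thus "x \<in> {1..n} - A" using t3 E3(1)[OF i(1), of "\<tau>3 i"] unfolding h3_def by auto
  qed
  have d12: "h1 ` F1 k n J \<inter> h2 ` F2 k n = {}"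
  proof (rule ccontr)
    assume "h1 ` F1 k n J \<inter> h2 ` F2 k n \<noteq> {}"
    then obtain i j where ij: "i \<in> F1 k n J" "j \<in> F2 k n" "h1 i = h2 j" by blast
    show False using disj12[OF ij(1,2), of "\<tau>1 i" "\<tau>2 j"] t1 t2 ij unfolding h1_def h2_def by simp
  qed
  have d13: "h1 ` F1 k n J \<inter> h3 ` F3 k n = {}"
  proof (rule ccontr)
    assume "h1 ` F1 k n J \<inter> h3 ` F3 k n \<noteq> {}"
    then obtain i j where ij: "i \<in> F1 k n J" "j \<in> F3 k n" "h1 i = h3 j" by blast
    show False using disj13[OF ij(1,2), of "\<tau>1 i" "\<tau>3 j"] t1 t3 ij unfolding h1_def h3_def by simp
  qed
  have d23: "h2 ` F2 k n \<inter> h3 ` F3 k n = {}"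
  proof (rule ccontr)
    assume "h2 ` F2 k n \<inter> h3 ` F3 k n \<noteq> {}"
    then obtain i j where ij: "i \<in> F2 k n" "j \<in> F3 k n" "h2 i = h3 j" by blast
    show False using disj23[OF ij(1,2), of "\<tau>2 i" "\<tau>3 j"] t2 t3 ij unfolding h2_def h3_def by simp
  qed
  have f1: "finite (h1 ` F1 k n J)" by (rule finite_subset[OF s1]) simp
  have f2: "finite (h2 ` F2 k n)" by (rule finite_subset[OF s2]) simp
  have f3: "finite (h3 ` F3 k n)" by (rule finite_subset[OF s3]) simp
  have "card (F1 k n J) + card (F2 k n) + card (F3 k n)
      = card (h1 ` F1 k n J) + card (h2 ` F2 k n) + card (h3 ` F3 k n)"
    using i1 i2 i3 by (simp add: card_image)
  also have "\<dots> = card (h1 ` F1 k n J \<union> h2 ` F2 k n \<union> h3 ` F3 k n)"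
  proof -
    have "card (h1 ` F1 k n J \<union> h2 ` F2 k n) = card (h1 ` F1 k n J) + card (h2 ` F2 k n)"
      by (rule card_Un_disjoint[OF f1 f2 d12])
    moreover have "card ((h1 ` F1 k n J \<union> h2 ` F2 k n) \<union> h3 ` F3 k n)
       = card (h1 ` F1 k n J \<union> h2 ` F2 k n) + card (h3 ` F3 k n)"
      by (rule card_Un_disjoint) (use f1 f2 f3 d13 d23 in auto)
    ultimately show ?thesis by simp
  qed
  also have "\<dots> \<le> card ({1..n} - A)" by (rule card_mono) (use s1 s2 s3 in auto)
  also have "\<dots> = n - card A"
  proof -
    have "finite A" using An by (rule finite_subset) simp
    thus ?thesis using An by (simp add: card_Diff_subset)
  qed
  finally show ?thesis .
qed

lemma div_lb: "(b::nat) > 0 \<Longrightarrow> real (a div b) \<ge> real a / real b - 1"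
proof -
  assume b: "b > 0"
  have "a = b * (a div b) + a mod b" by simp
  hence "real a = real b * real (a div b) + real (a mod b)" by (metis of_nat_add of_nat_mult)
  moreover have "real (a mod b) < real b" using b by simp
  ultimately have "real a < real b * (real (a div b) + 1)" by (simp add: algebra_simps)
  thus ?thesis using b by (simp add: field_simps)
qed

lemma div_ub: "real (a div b) \<le> real a / real b"
proof (cases "b = 0")
  case False
  have "real b * real (a div b) \<le> real a"
    by (metis div_times_less_eq_dividend mult.commute of_nat_le_iff of_nat_mult)
  thus ?thesis using False by (simp add: field_simps)
qed simp

lemma diff_lb: "real (a - b) \<ge> real a - real b"
  by (cases "b \<le> a") auto

lemma lin_inj: "(s::nat) < q \<Longrightarrow> s' < q \<Longrightarrow> q*j+s = q*j'+s' \<Longrightarrow> s = s' \<and> j = j'"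
proof -
  assume a: "s < q" "s' < q" "q*j+s = q*j'+s'"
  have "(q*j+s) mod q = s" using a(1) by (simp add: add.commute[of "q*j"])
  moreover have "(q*j'+s') mod q = s'" using a(2) by (simp add: add.commute[of "q*j'"])
  moreover have "(q*j+s) div q = j" using a(1) by (simp add: add.commute[of "q*j"])
  moreover have "(q*j'+s') div q = j'" using a(2) by (simp add: add.commute[of "q*j'"])
  ultimately show ?thesis using a(3) by metis
qed

lemma range_mem: "(q::nat) > 0 \<Longrightarrow> N1 div q + 1 \<le> j \<Longrightarrow> j < N2 div q \<Longrightarrow> s < q \<Longrightarrow> N1 < q*j+s \<and> q*j+s \<le> N2"
proof -
  assume a: "q > 0" "N1 div q + 1 \<le> j" "j < N2 div q" "s < q"
  have "N1 < q * (N1 div q) + q" using a(1) by (metis add.commute add_less_cancel_left div_mult_mod_eq mod_less_divisor mult.commute)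
  moreover have "q * (N1 div q) + q \<le> q * j" using a(2) by (metis add.commute mult_Suc_right mult_le_mono2 plus_1_eq_Suc)
  moreover have "q * j + q \<le> q * (N2 div q)" using a(3) by (metis Suc_le_eq mult_Suc_right mult_le_mono2 add.commute)
  moreover have "q * (N2 div q) \<le> N2" by (simp add: div_times_less_eq_dividend mult.commute)
  ultimately show ?thesis using a(4) by linarith
qed

lemma lin2: "(a::real) \<ge> 4*d \<Longrightarrow> d \<ge> e - f - 1 \<Longrightarrow> e \<ge> N2/10 - 1 \<Longrightarrow> f \<le> N1/10
  \<Longrightarrow> N2 \<ge> X - 1 \<Longrightarrow> N1 \<le> Y \<Longrightarrow> a \<ge> 2/5*(X-Y) - 9"
  by argo

lemma card_F2: "real (card (F2 k n)) \<ge> 2/5 * (real n / 5^(k-1) - real n / 6^(k-1)) - 9"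
proof -
  define N1 where "N1 = n div 6^(k-1)"
  define N2 where "N2 = n div 5^(k-1)"
  define D where "D = ({1,3,7,9::nat} \<times> {N1 div 10 + 1..<N2 div 10})"
  define \<phi> where "\<phi> = (\<lambda>(s::nat,j::nat). 10*j+s)"
  have inj: "inj_on \<phi> D"
  proof (rule inj_onI)
    fix x y assume "x \<in> D" "y \<in> D" "\<phi> x = \<phi> y"
    thus "x = y" unfolding D_def \<phi>_def using lin_inj[of "fst x" 10 "fst y" "snd x" "snd y"] by auto
  qed
  have sub: "\<phi> ` D \<subseteq> F2 k n"
  proof
    fix x assume "x \<in> \<phi> ` D"
    then obtain s j where "(s,j) \<in> D" "x = \<phi> (s,j)" by auto
    hence sj: "s \<in> {1,3,7,9}" "N1 div 10 + 1 \<le> j" "j < N2 div 10" "x = 10*j+s"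
      unfolding D_def \<phi>_def by auto
    have "N1 < x \<and> x \<le> N2" using sj range_mem[of 10 N1 j N2 s] by auto
    moreover have "odd x \<and> \<not> 5 dvd x" using sj(1) unfolding sj(4) by (elim insertE; simp; presburger)
    ultimately have "N1 < x \<and> x \<le> N2 \<and> odd x \<and> \<not> 5 dvd x" by blast
    thus "x \<in> F2 k n" unfolding F2_def N1_def N2_def by auto
  qed
  have fin: "finite (F2 k n)" by (rule finite_subset[of _ "{..n}"]) (auto simp: F2_def dest: le_div_mult intro: order_trans[OF _ div_le_dividend])
  have "card D \<le> card (F2 k n)" using card_inj_on_le[OF inj sub fin] .
  moreover have "card D = 4 * (N2 div 10 - (N1 div 10 + 1))" unfolding D_def by (simp add: card_cartesian_product)
  ultimately have "real (card (F2 k n)) \<ge> 4 * real (N2 div 10 - (N1 div 10 + 1))" by simp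
  moreover have "real (N2 div 10 - (N1 div 10 + 1)) \<ge> real (N2 div 10) - real (N1 div 10) - 1"
    using diff_lb[of "N2 div 10" "N1 div 10 + 1"] by simp
  moreover have "real (N2 div 10) \<ge> real N2 / 10 - 1" using div_lb[of 10 N2] by simp
  moreover have "real (N1 div 10) \<le> real N1 / 10" using div_ub[of N1 10] by simp
  moreover have "real N2 \<ge> real n / 5^(k-1) - 1" unfolding N2_def using div_lb[of "5^(k-1)" n] by simp
  moreover have "real N1 \<le> real n / 6^(k-1)" unfolding N1_def using div_ub[of n "6^(k-1)"] by simp
  ultimately show ?thesis
    by (rule lin2)
qed

lemma lin3: "(a::real) \<ge> 8*d \<Longrightarrow> d \<ge> e - f - 1 \<Longrightarrow> e \<ge> N2/30 - 1 \<Longrightarrow> f \<le> N1/30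
  \<Longrightarrow> N2 \<ge> X - 1 \<Longrightarrow> N1 \<le> Y \<Longrightarrow> a \<ge> 4/15*(X-Y) - 17"
  by argo

lemma card_F3: "real (card (F3 k n)) \<ge> 4/15 * (real n / 7^(k-1) - real n / 10^(k-1)) - 17"
proof -
  define N1 where "N1 = n div 10^(k-1)"
  define N2 where "N2 = n div 7^(k-1)"
  define D where "D = ({1,7,11,13,17,19,23,29::nat} \<times> {N1 div 30 + 1..<N2 div 30})"
  define \<phi> where "\<phi> = (\<lambda>(s::nat,j::nat). 30*j+s)"
  have inj: "inj_on \<phi> D"
  proof (rule inj_onI)
    fix x y assume "x \<in> D" "y \<in> D" "\<phi> x = \<phi> y"
    thus "x = y" unfolding D_def \<phi>_def using lin_inj[of "fst x" 30 "fst y" "snd x" "snd y"] by auto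
  qed
  have sub: "\<phi> ` D \<subseteq> F3 k n"
  proof
    fix x assume "x \<in> \<phi> ` D"
    then obtain s j where "(s,j) \<in> D" "x = \<phi> (s,j)" by auto
    hence sj: "s \<in> {1,7,11,13,17,19,23,29}" "N1 div 30 + 1 \<le> j" "j < N2 div 30" "x = 30*j+s"
      unfolding D_def \<phi>_def by auto
    have "N1 < x \<and> x \<le> N2" using sj range_mem[of 30 N1 j N2 s] by auto
    moreover have "odd x \<and> \<not> 3 dvd x \<and> \<not> 5 dvd x" using sj(1) unfolding sj(4) by (elim insertE; simp; presburger)
    ultimately have "N1 < x \<and> x \<le> N2 \<and> odd x \<and> \<not> 3 dvd x \<and> \<not> 5 dvd x" by blast
    thus "x \<in> F3 k n" unfolding F3_def N1_def N2_def by auto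
  qed
  have fin: "finite (F3 k n)" by (rule finite_subset[of _ "{..n}"]) (auto simp: F3_def dest: le_div_mult intro: order_trans[OF _ div_le_dividend])
  have "card D \<le> card (F3 k n)" using card_inj_on_le[OF inj sub fin] .
  moreover have "card D = 8 * (N2 div 30 - (N1 div 30 + 1))" unfolding D_def by (simp add: card_cartesian_product)
  ultimately have "real (card (F3 k n)) \<ge> 8 * real (N2 div 30 - (N1 div 30 + 1))" by simp
  moreover have "real (N2 div 30 - (N1 div 30 + 1)) \<ge> real (N2 div 30) - real (N1 div 30) - 1"
    using diff_lb[of "N2 div 30" "N1 div 30 + 1"] by simp
  moreover have "real (N2 div 30) \<ge> real N2 / 30 - 1" using div_lb[of 30 N2] by simp
  moreover have "real (N1 div 30) \<le> real N1 / 30" using div_ub[of N1 30] by simp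
  moreover have "real N2 \<ge> real n / 7^(k-1) - 1" unfolding N2_def using div_lb[of "7^(k-1)" n] by simp
  moreover have "real N1 \<le> real n / 10^(k-1)" unfolding N1_def using div_ub[of n "10^(k-1)"] by simp
  ultimately show ?thesis
    by (rule lin3)
qed

lemma card_O:
  assumes P: "(P::nat) > 0"
  shows "real (card {m. odd m \<and> m * P \<le> n}) \<ge> real n / (2 * real P) - 1/2"
proof -
  define M where "M = n div P"
  define Od where "Od = {m. odd m \<and> m * P \<le> n}"
  have sub: "(\<lambda>i. 2*i+1) ` {..<(M+1) div 2} \<subseteq> Od"
  proof
    fix x assume "x \<in> (\<lambda>i. 2*i+1) ` {..<(M+1) div 2}"
    then obtain i where i: "i < (M+1) div 2" "x = 2*i+1" by auto
    have "x \<le> M" using i by linarith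
    hence "x * P \<le> M * P" by simp
    also have "M * P \<le> n" unfolding M_def by (rule div_times_less_eq_dividend)
    finally show "x \<in> Od" unfolding Od_def using i by simp
  qed
  have fin: "finite Od" 
  proof (rule finite_subset[of _ "{..n}"])
    show "Od \<subseteq> {..n}"
    proof
      fix m assume "m \<in> Od"
      hence "m * P \<le> n" unfolding Od_def by simp
      moreover have "m \<le> m * P" using P by simp
      ultimately have "m \<le> n" by linarith
      thus "m \<in> {..n}" by simp
    qed
  qed simp
  have inj: "inj_on (\<lambda>i::nat. 2*i+1) {..<(M+1) div 2}" by (rule inj_onI) simp
  have "(M+1) div 2 \<le> card Od" using card_inj_on_le[OF inj sub fin] by simp
  moreover have "real M \<le> 2 * real ((M+1) div 2)"
  proof -
    have "M \<le> 2 * ((M+1) div 2)" by linarith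
    thus ?thesis by (metis of_nat_le_iff of_nat_mult of_nat_numeral)
  qed
  moreover have "real M \<ge> real n / real P - 1" unfolding M_def using div_lb[OF P] by simp
  moreover have "real n / (2 * real P) = (real n / real P) / 2" by simp
  ultimately show ?thesis unfolding Od_def by linarith
qed

lemma geom: "(x::real) > 1 \<Longrightarrow> (\<Sum>j<J. c / x^(Suc j)) = c * (1 - 1/x^J) / (x - 1)"
proof (induction J)
  case 0 thus ?case by simp
next
  case (Suc J)
  have "(\<Sum>j<Suc J. c / x^(Suc j)) = c * (1 - 1/x^J) / (x - 1) + c / x^(Suc J)" using Suc by simp
  also have "\<dots> = c * (1 - 1/x^(Suc J)) / (x - 1)" using Suc.prems by (simp add: field_simps)
  finally show ?case .
qed

lemma card_F1:
  assumes k: "k \<ge> 1"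
  shows "real (card (F1 k n J)) \<ge> (\<Sum>j<J. real n / (2^k)^(Suc j)) - real J / 2"
proof -
  have fin: "\<forall>j\<in>{..<J}. finite {m. odd m \<and> m * 2^(j*k+k-1) \<le> n}"
  proof
    fix j
    show "finite {m. odd m \<and> m * 2^(j*k+k-1) \<le> n}"
    proof (rule finite_subset[of _ "{..n}"])
      show "{m. odd m \<and> m * 2^(j*k+k-1) \<le> n} \<subseteq> {..n}"
      proof
        fix m assume "m \<in> {m. odd m \<and> m * 2^(j*k+k-1) \<le> n}"
        hence "m * 2^(j*k+k-1) \<le> n" by simp
        moreover have "m \<le> m * 2^(j*k+k-1)" by simp
        ultimately have "m \<le> n" by linarith
        thus "m \<in> {..n}" by simp
      qed
    qed simp
  qed
  have "card (F1 k n J) = (\<Sum>j<J. card {m. odd m \<and> m * 2^(j*k+k-1) \<le> n})"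
    unfolding F1_def using fin by (simp add: card_SigmaI)
  hence "real (card (F1 k n J)) = (\<Sum>j<J. real (card {m. odd m \<and> m * 2^(j*k+k-1) \<le> n}))" by simp
  also have "\<dots> \<ge> (\<Sum>j<J. real n / (2^k)^(Suc j) - 1/2)"
  proof (rule sum_mono)
    fix j assume "j \<in> {..<J}"
    have "(2::real) * 2^(j*k+k-1) = 2^(Suc (j*k+k-1))" by simp
    also have "Suc (j*k+k-1) = k * Suc j" using k by simp
    also have "(2::real)^(k * Suc j) = (2^k)^(Suc j)" by (rule power_mult)
    finally have e: "2 * real (2^(j*k+k-1)::nat) = (2^k)^(Suc j)" by simp
    show "real n / (2^k)^(Suc j) - 1/2 \<le> real (card {m. odd m \<and> m * 2^(j*k+k-1) \<le> n})"
      using card_O[of "2^(j*k+k-1)" n] e by simp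
  qed
  finally show ?thesis by (simp add: sum_subtractf)
qed

lemma divle: "(z::real) \<le> 1 \<Longrightarrow> c \<ge> 1 \<Longrightarrow> z / c \<le> 1"
  by (simp add: divide_le_eq_1)

lemma alg1: "(m::real) * (1 - 1/y) / c = m / c - (m / y) / c"
  by (simp add: diff_divide_distrib right_diff_distrib)

lemma key:
  assumes k: "k \<ge> 3" and n: "n \<ge> 2^(k-1)" and An: "A \<subseteq> {1..n}"
    and nA: "\<not> contains_k_GP k (real ` A)"
  shows "real n - real (card A) \<ge> gp_const k * real n - (43 / ln 2) * ln (real n) / real k"
proof -
  define J where "J = (LEAST J. n \<le> 2^(k*J))"
  have ex: "n \<le> 2^(k*n)"
  proof -
    have "n < 2^n" by (rule less_exp)
    also have "(2::nat)^n \<le> 2^(k*n)" using k by (intro power_increasing) auto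
    finally show ?thesis by simp
  qed
  have hJ: "n \<le> 2^(k*J)" unfolding J_def by (rule LeastI[of _ n]) (rule ex)
  have n4: "n \<ge> 4"
  proof -
    have "(2::nat)^2 \<le> 2^(k-1)" using k by (intro power_increasing) auto
    thus ?thesis using n by simp
  qed
  have J0: "J \<ge> 1"
  proof (rule ccontr)
    assume "\<not> J \<ge> 1" hence "J = 0" by simp
    thus False using hJ n4 by simp
  qed
  have hJ2: "\<not> n \<le> 2^(k*(J-1))" unfolding J_def by (rule not_less_Least) (use J0 in \<open>simp add: J_def\<close>)
  have cA: "card A \<le> n" using card_mono[OF _ An] by simp
  have cm: "card (F1 k n J) + card (F2 k n) + card (F3 k n) \<le> n - card A" by (rule count_main[OF nA An])
  hence cmr: "real (card (F1 k n J)) + real (card (F2 k n)) + real (card (F3 k n)) \<le> real n - real (card A)"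
    using cA by (metis of_nat_add of_nat_diff of_nat_le_iff)
  have x1: "(2::real)^k > 1" using k by simp
  have S: "(\<Sum>j<J. real n / (2^k)^(Suc j)) = real n * (1 - 1/(2^k)^J) / (2^k - 1)"
    by (rule geom[OF x1])
  have pJ: "real n \<le> ((2::real)^k)^J"
  proof -
    have "real n \<le> real (2^(k*J))" using hJ by linarith
    thus ?thesis by (simp add: power_mult)
  qed
  have S2: "real n * (1 - 1/(2^k)^J) / (2^k - 1) \<ge> real n / (2^k - 1) - 1"
  proof -
    have "real n / (2^k)^J \<le> 1" using pJ by simp
    moreover have "(2::real)^k - 1 \<ge> 1"
    proof -
      have "(2::real)^1 \<le> 2^k" using k by (intro power_increasing) auto
      thus ?thesis by simp
    qed
    ultimately have "(real n / (2^k)^J) / (2^k - 1) \<le> 1"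
      by (rule divle)
    moreover have "real n * (1 - 1/(2^k)^J) / (2^k - 1) = real n / (2^k - 1) - (real n / (2^k)^J) / (2^k - 1)"
      by (rule alg1)
    ultimately show ?thesis by linarith
  qed
  have c1: "real (card (F1 k n J)) \<ge> real n / (2^k - 1) - 1 - real J / 2"
    using card_F1[of k n J] k S S2 by simp
  have c2: "real (card (F2 k n)) \<ge> 2/5 * (real n / 5^(k-1) - real n / 6^(k-1)) - 9" by (rule card_F2)
  have c3: "real (card (F3 k n)) \<ge> 4/15 * (real n / 7^(k-1) - real n / 10^(k-1)) - 17" by (rule card_F3)
  have gp: "gp_const k * real n = real n / (2^k - 1) + 2/5 * (real n / 5^(k-1) - real n / 6^(k-1))
      + 4/15 * (real n / 7^(k-1) - real n / 10^(k-1))"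
    unfolding gp_const_def by (simp add: algebra_simps)
  have main: "real n - real (card A) \<ge> gp_const k * real n - 27 - real J / 2"
    using cmr c1 c2 c3 gp by argo
  define L where "L = ln (real n) / real k"
  have l2: "ln (2::real) > 0" by simp
  have kr: "real k \<ge> 3" using k by simp
  have "real (2^(k*(J-1))::nat) < real n" using hJ2 by simp
  hence "ln (2^(k*(J-1))) < ln (real n)" using n4 by (simp add: ln_less_cancel_iff)
  hence "real (k*(J-1)) * ln 2 < ln (real n)" by (simp add: ln_realpow)
  hence "real k * (real J - 1) * ln 2 < ln (real n)" using J0 by (simp add: of_nat_diff)
  hence JL: "real J - 1 \<le> L / ln 2" unfolding L_def using kr l2 by (simp add: field_simps)
  have "real (2^(k-1)::nat) \<le> real n" using n by linarith
  hence "(2::real)^(k-1) \<le> real n" by simp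
  moreover have "(0::real) < 2^(k-1)" by simp
  moreover have "(0::real) < real n" using n4 by simp
  ultimately have "ln ((2::real)^(k-1)) \<le> ln (real n)" using ln_le_cancel_iff by blast
  hence "real (k-1) * ln 2 \<le> ln (real n)" by (simp add: ln_realpow)
  hence "(real k - 1) * ln 2 \<le> ln (real n)" using k by (simp add: of_nat_diff)
  moreover have "2/3 * real k \<le> real k - 1" using kr by simp
  ultimately have "2/3 * real k * ln 2 \<le> ln (real n)" using l2
    by (meson mult_right_mono less_imp_le order.trans)
  hence LL: "L \<ge> 2/3 * ln 2" unfolding L_def using kr by (simp add: field_simps)
  have "L / ln 2 \<ge> 2/3" using LL l2 by (simp add: field_simps)
  hence fin: "27 + real J / 2 \<le> (43 / ln 2) * L"
  proof -
    assume a: "L / ln 2 \<ge> 2/3"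
    have "(43 / ln 2) * L = 43 * (L / ln 2)" by simp
    thus ?thesis using a JL by argo
  qed
  have "(43 / ln 2) * ln (real n) / real k = (43 / ln 2) * L" unfolding L_def by simp
  thus ?thesis using main fin by argo
qed

theorem theorem1:
  "\<exists>C::real. \<forall>(k::nat) (n::nat) (A::nat set).
     k \<ge> 3 \<longrightarrow> n \<ge> 2 ^ (k - 1) \<longrightarrow> A \<subseteq> {1..n} \<longrightarrow>
     \<not> contains_k_GP k (real ` A) \<longrightarrow>
     real n - real (card A) \<ge> gp_const k * real n - C * ln (real n) / real k"
  using key by blast

end
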